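(* Let $C$ be a maximal cap in $AG(4,3)$ with anchor point $a$. Then $C$ is the union of $10$ $a$-lines, and every point $p \in AG(4,3)\setminus (C\cup\{a\})$ completes exactly three lines with pairs of points of $C$.
   Context: $AG(4,3)$ is the affine space $\mathbb{F}_3^4$; a line is a set of three distinct points $\{x,y,z\}$ with $x+y+z=0$. A cap is a set of points containing no line; a maximal cap is a cap of largest possible size (in $AG(4,3)$ this size is $20$). Every maximal cap $C$ in $AG(4,3)$ has a unique anchor point $a\notin C$ such that $C$ is a union of pairs $\{b,c\}$ with $\{a,b,c\}$ a line. For a point $a$, an $a$-line is a pair of points $\{b,c\}$ such that $\{a,b,c\}$ is a line. For a set $S$ and a point $p\notin S$, $p$ completes a line with a pair of points of $S$ if there are distinct $x,y\in S$ with $\{p,x,y\}$ a line; the number of lines $p$ completes with $S$ is the number of such unordered pairs $\{x,y\}$. *)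

theory Defs
  imports "HOL-Analysis.Finite_Cartesian_Product" "HOL-Library.Numeral_Type"
begin

text \<open>Points of AG(4,3) = F_3^4: vectors with 4 coordinates in the field Z/3 (numeral type 3).\<close>
type_synonym pt = "3 ^ 4"

definition is_line :: "pt set \<Rightarrow> bool" where
  "is_line L \<longleftrightarrow> (\<exists>x y z. L = {x, y, z} \<and> x \<noteq> y \<and> x \<noteq> z \<and> y \<noteq> z \<and> x + y + z = 0)"

definition is_cap :: "pt set \<Rightarrow> bool" where
  "is_cap C \<longleftrightarrow> (\<forall>L. L \<subseteq> C \<longrightarrow> \<not> is_line L)"

definition is_maximal_cap :: "pt set \<Rightarrow> bool" where
  "is_maximal_cap C \<longleftrightarrow> is_cap C \<and> (\<forall>D. is_cap D \<longrightarrow> card D \<le> card C)"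

definition a_line :: "pt \<Rightarrow> pt set \<Rightarrow> bool" where
  "a_line a P \<longleftrightarrow> (\<exists>b c. P = {b, c} \<and> b \<noteq> c \<and> is_line {a, b, c})"

definition is_anchor :: "pt \<Rightarrow> pt set \<Rightarrow> bool" where
  "is_anchor a C \<longleftrightarrow> a \<notin> C \<and> C = \<Union>{P. a_line a P \<and> P \<subseteq> C}"

definition lines_completed :: "pt \<Rightarrow> pt set \<Rightarrow> nat" where
  "lines_completed p S = card {P. \<exists>x y. P = {x, y} \<and> x \<in> S \<and> y \<in> S \<and> x \<noteq> y \<and> is_line {p, x, y}}"

end

theory Submission
  imports Defs
begin

lemma UNIV3: "(UNIV::3 set) = {0,1,2}"
  by (rule sym, rule card_seteq) auto
lemma UNIV4: "(UNIV::4 set) = {0,1,2,3}"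
  by (rule sym, rule card_seteq) auto
lemma all4: "(\<forall>c::4. P c) \<longleftrightarrow> P 0 \<and> P 1 \<and> P 2 \<and> P 3"
  using UNIV4 by (metis UNIV_I empty_iff insert_iff)
lemma all3: "(\<forall>c::3. P c) \<longleftrightarrow> P 0 \<and> P 1 \<and> P 2"
  using UNIV3 by (metis UNIV_I empty_iff insert_iff)
lemma card_pt: "CARD(pt) = 81" by simp

lemma sc3_2: "2 * (c::3) = - c" using all3[of "\<lambda>c. 2 * (c::3) = - c"] by simp
lemma sc3_3: "(c::3) + c + c = 0" using all3[of "\<lambda>c. (c::3) + c + c = 0"] by simp
lemma sc3_neg: "- (c::3) = c \<longleftrightarrow> c = 0" using all3[of "\<lambda>c. (- (c::3) = c) = (c = 0)"] by simp
lemma sc3_sq: "(c::3) \<noteq> 0 \<Longrightarrow> c * c = 1" using all3[of "\<lambda>c. (c::3) \<noteq> 0 \<longrightarrow> c * c = 1"] by simp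

lemma smult2: "(2::3) *s x = - x" by (simp add: vec_eq_iff sc3_2)
lemmas smult_simps = vector_smult_lzero vector_smult_lid smult2

lemma three3: "3 * (c::3) = 0" using sc3_3[of c] by (simp add: algebra_simps)
lemma pt3: "(x::pt) + x + x = 0" by (simp add: vec_eq_iff three3)
lemma pt_neg: "- (x::pt) = x \<longleftrightarrow> x = 0" 
  by (auto simp: vec_eq_iff sc3_neg)

definition dot :: "pt \<Rightarrow> pt \<Rightarrow> 3" where "dot w x = (\<Sum>i\<in>UNIV. w$i * x$i)"

lemma dot_add_r: "dot w (x + y) = dot w x + dot w y" by (simp add: dot_def distrib_left sum.distrib)
lemma dot_add_l: "dot (x + y) w = dot x w + dot y w" by (simp add: dot_def distrib_right sum.distrib)
lemma dot_neg_r: "dot w (- x) = - dot w x" by (simp add: dot_def sum_negf)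
lemma dot_neg_l: "dot (- x) w = - dot x w" by (simp add: dot_def sum_negf)
lemma dot_diff_l: "dot (x - y) w = dot x w - dot y w" by (simp add: dot_def left_diff_distrib sum_subtractf)
lemma dot_diff_r: "dot w (x - y) = dot w x - dot w y" by (simp add: dot_def right_diff_distrib sum_subtractf)
lemma dot_smult_r: "dot w (c *s x) = c * dot w x" by (simp add: dot_def sum_distrib_left mult.left_commute)
lemma dot_smult_l: "dot (c *s w) x = c * dot w x" by (simp add: dot_def sum_distrib_left mult.assoc)
lemma dot_comm: "dot w x = dot x w" by (simp add: dot_def mult.commute)
lemma dot_0_r[simp]: "dot w 0 = 0" by (simp add: dot_def)
lemma dot_0_l[simp]: "dot 0 w = 0" by (simp add: dot_def)

lemma card_translate: "card ((\<lambda>w. w + (t::pt)) ` A) = card A"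
  by (rule card_image) (simp add: inj_on_def)

lemma L1: assumes "x \<noteq> 0" shows "card {w. dot w x = 0} = 27"
proof -
  obtain i where i: "x$i \<noteq> 0" using assms by (auto simp: vec_eq_iff)
  define e where "e = axis i (x$i)"
  have "dot e x = (\<Sum>j\<in>UNIV. if j = i then x$i * x$i else 0)"
    unfolding dot_def e_def by (rule sum.cong) (auto simp: axis_def)
  then have e1: "dot e x = 1" by (simp add: sc3_sq[OF i])
  define F where "F s = {w. dot w x = s}" for s
  have Fs: "(\<lambda>w. w + s *s e) ` F 0 = F s" for s
  proof
    show "(\<lambda>w. w + s *s e) ` F 0 \<subseteq> F s"
      by (auto simp: F_def dot_add_l dot_smult_l e1)
    show "F s \<subseteq> (\<lambda>w. w + s *s e) ` F 0"
    proof
      fix w assume "w \<in> F s"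
      then have "w - s *s e \<in> F 0"
        by (simp add: F_def dot_diff_l dot_smult_l e1)
      then show "w \<in> (\<lambda>w. w + s *s e) ` F 0" by (rule rev_image_eqI) simp
    qed
  qed
  have c: "card (F s) = card (F 0)" for s
    using Fs[of s] card_translate[of "s *s e" "F 0"] by simp
  have U: "UNIV = F 0 \<union> F 1 \<union> F 2"
    using all3[of "\<lambda>c. \<forall>w. dot w x = c \<longrightarrow> w \<in> F 0 \<union> F 1 \<union> F 2"] by (auto simp: F_def)
  have "card (UNIV::pt set) = card (F 0) + card (F 1) + card (F 2)"
    unfolding U by (subst card_Un_disjoint, auto simp: F_def, subst card_Un_disjoint, auto)
  then have "81 = 3 * card (F 0)" using c[of 1] c[of 2] by simp
  then show ?thesis by (simp add: F_def)
qed

definition indep2 :: "pt \<Rightarrow> pt \<Rightarrow> bool" where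
  "indep2 x y \<longleftrightarrow> (\<forall>\<alpha> \<beta>. \<alpha> *s x + \<beta> *s y = 0 \<longrightarrow> \<alpha> = 0 \<and> \<beta> = 0)"
definition indep3 :: "pt \<Rightarrow> pt \<Rightarrow> pt \<Rightarrow> bool" where
  "indep3 x y z \<longleftrightarrow> (\<forall>\<alpha> \<beta> \<gamma>. \<alpha> *s x + \<beta> *s y + \<gamma> *s z = 0 \<longrightarrow> \<alpha> = 0 \<and> \<beta> = 0 \<and> \<gamma> = 0)"

lemma card_sum: "card {w::pt. P w} = (\<Sum>w\<in>UNIV. if P w then 1 else 0)"
  by (simp add: sum.If_cases)

lemma a1: "(0::3) \<notin> {1,2}" by simp
lemma a2: "(1::3) \<notin> {2}" by simp
lemma s3: "sum f (UNIV::3 set) = f 0 + f 1 + f 2"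
  unfolding UNIV3 by (subst sum.insert, simp, rule a1, subst sum.insert, simp, rule a2, simp add: add.assoc)

lemma kernel1: "(\<Sum>\<gamma>\<in>UNIV. if t + \<gamma>*c = (0::3) then 1 else 0) = (if c = 0 then (if t = 0 then 3 else 0) else (1::nat))"
proof -
  have "t \<in> {0,1,2}" "c \<in> {0,1,2}" using UNIV3 by auto
  then show ?thesis by (auto simp: s3)
qed

lemma kernel2: "(\<Sum>\<alpha>\<in>UNIV. \<Sum>\<beta>\<in>UNIV. if \<alpha>*a + \<beta>*b = (0::3) then 1 else 0) = (if a = 0 \<and> b = 0 then 9 else (3::nat))"
proof -
  have "(\<Sum>\<alpha>\<in>UNIV. \<Sum>\<beta>\<in>UNIV. if \<alpha>*a + \<beta>*b = (0::3) then 1 else 0) = (\<Sum>\<alpha>\<in>UNIV. if b = 0 then (if \<alpha>*a = 0 then 3 else 0) else (1::nat))"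
    by (simp only: kernel1)
  also have "\<dots> = (if a = 0 \<and> b = 0 then 9 else (3::nat))"
  proof -
    have "a \<in> {0,1,2}" using UNIV3 by auto
    then show ?thesis by (auto simp: s3)
  qed
  finally show ?thesis .
qed

lemma kernel3: "(\<Sum>\<alpha>\<in>UNIV. \<Sum>\<beta>\<in>UNIV. \<Sum>\<gamma>\<in>UNIV. if \<alpha>*a + \<beta>*b + \<gamma>*c = (0::3) then 1 else 0) = (if a = 0 \<and> b = 0 \<and> c = 0 then 27 else (9::nat))"
proof (cases "c = 0")
  case True
  then have "(\<Sum>\<alpha>\<in>UNIV. \<Sum>\<beta>\<in>UNIV. \<Sum>\<gamma>\<in>UNIV. if \<alpha>*a + \<beta>*b + \<gamma>*c = (0::3) then 1 else 0)
     = (\<Sum>\<alpha>\<in>UNIV. \<Sum>\<beta>\<in>UNIV. (3::nat) * (if \<alpha>*a + \<beta>*b = (0::3) then 1 else 0))"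
    using True by simp
  also have "\<dots> = 3 * (\<Sum>\<alpha>\<in>UNIV. \<Sum>\<beta>\<in>UNIV. (if \<alpha>*a + \<beta>*b = (0::3) then 1 else 0))"
    by (simp add: sum_distrib_left)
  finally show ?thesis using True by (simp add: kernel2)
next
  case False
  then show ?thesis by (simp only: kernel1) (simp add: s3)
qed

lemma sum_const_if: "(\<Sum>w\<in>(UNIV::pt set). if P w then (c::nat) else 0) = c * card {w. P w}"
  by (simp add: sum.If_cases Int_def mult.commute)

lemma L2: assumes "indep2 x y" shows "card {w. dot w x = 0 \<and> dot w y = 0} = 9"
proof -
  have t: "card {w. dot w (\<alpha> *s x + \<beta> *s y) = 0} = (if \<alpha> = 0 \<and> \<beta> = 0 then 81 else 27)" for \<alpha> \<beta>
  proof (cases "\<alpha> = 0 \<and> \<beta> = 0")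
    case True then show ?thesis by simp
  next
    case False
    then have "\<alpha> *s x + \<beta> *s y \<noteq> 0" using assms unfolding indep2_def by blast
    then show ?thesis using L1 False by simp
  qed
  have "(297::nat) = (\<Sum>\<alpha>\<in>UNIV. \<Sum>\<beta>\<in>UNIV. card {w. dot w (\<alpha> *s x + \<beta> *s y) = 0})"
    unfolding t by (simp add: s3)
  also have "\<dots> = (\<Sum>\<alpha>\<in>UNIV. \<Sum>\<beta>\<in>UNIV. \<Sum>w\<in>UNIV. if \<alpha> * dot w x + \<beta> * dot w y = 0 then 1 else 0)"
    by (simp add: card_sum dot_add_r dot_smult_r)
  also have "\<dots> = (\<Sum>\<alpha>\<in>UNIV. \<Sum>w\<in>UNIV. \<Sum>\<beta>\<in>UNIV. if \<alpha> * dot w x + \<beta> * dot w y = 0 then 1 else 0)"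
    by (rule sum.cong[OF refl], rule sum.swap)
  also have "\<dots> = (\<Sum>w\<in>UNIV. \<Sum>\<alpha>\<in>UNIV. \<Sum>\<beta>\<in>UNIV. if \<alpha> * dot w x + \<beta> * dot w y = 0 then 1 else 0)"
    by (rule sum.swap)
  also have "\<dots> = (\<Sum>w\<in>UNIV. (if dot w x = 0 \<and> dot w y = 0 then 6 else 0) + 3)"
    unfolding kernel2 by (rule sum.cong) auto
  also have "\<dots> = 6 * card {w. dot w x = 0 \<and> dot w y = 0} + 243"
    by (simp only: sum.distrib sum_const_if) simp
  finally show ?thesis by simp
qed

lemma L3: assumes "indep3 x y z" shows "card {w. dot w x = 0 \<and> dot w y = 0 \<and> dot w z = 0} = 3"
proof -
  have t: "card {w. dot w (\<alpha> *s x + \<beta> *s y + \<gamma> *s z) = 0} = (if \<alpha> = 0 \<and> \<beta> = 0 \<and> \<gamma> = 0 then 81 else 27)" for \<alpha> \<beta> \<gamma>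
  proof (cases "\<alpha> = 0 \<and> \<beta> = 0 \<and> \<gamma> = 0")
    case True then show ?thesis by simp
  next
    case False
    then have "\<alpha> *s x + \<beta> *s y + \<gamma> *s z \<noteq> 0" using assms unfolding indep3_def by blast
    then show ?thesis using L1 False by simp
  qed
  have "(783::nat) = (\<Sum>\<alpha>\<in>UNIV. \<Sum>\<beta>\<in>UNIV. \<Sum>\<gamma>\<in>UNIV. card {w. dot w (\<alpha> *s x + \<beta> *s y + \<gamma> *s z) = 0})"
    unfolding t by (simp add: s3)
  also have "\<dots> = (\<Sum>\<alpha>\<in>UNIV. \<Sum>\<beta>\<in>UNIV. \<Sum>\<gamma>\<in>UNIV. \<Sum>w\<in>UNIV. if \<alpha> * dot w x + \<beta> * dot w y + \<gamma> * dot w z = 0 then 1 else 0)"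
    by (simp add: card_sum dot_add_r dot_smult_r)
  also have "\<dots> = (\<Sum>\<alpha>\<in>UNIV. \<Sum>\<beta>\<in>UNIV. \<Sum>w\<in>UNIV. \<Sum>\<gamma>\<in>UNIV. if \<alpha> * dot w x + \<beta> * dot w y + \<gamma> * dot w z = 0 then 1 else 0)"
    by (rule sum.cong[OF refl], rule sum.cong[OF refl], rule sum.swap)
  also have "\<dots> = (\<Sum>\<alpha>\<in>UNIV. \<Sum>w\<in>UNIV. \<Sum>\<beta>\<in>UNIV. \<Sum>\<gamma>\<in>UNIV. if \<alpha> * dot w x + \<beta> * dot w y + \<gamma> * dot w z = 0 then 1 else 0)"
    by (rule sum.cong[OF refl], rule sum.swap)
  also have "\<dots> = (\<Sum>w\<in>UNIV. \<Sum>\<alpha>\<in>UNIV. \<Sum>\<beta>\<in>UNIV. \<Sum>\<gamma>\<in>UNIV. if \<alpha> * dot w x + \<beta> * dot w y + \<gamma> * dot w z = 0 then 1 else 0)"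
    by (rule sum.swap)
  also have "\<dots> = (\<Sum>w\<in>UNIV. (if dot w x = 0 \<and> dot w y = 0 \<and> dot w z = 0 then 18 else 0) + 9)"
    unfolding kernel3 by (rule sum.cong) auto
  also have "\<dots> = 18 * card {w. dot w x = 0 \<and> dot w y = 0 \<and> dot w z = 0} + 729"
    by (simp only: sum.distrib sum_const_if) simp
  finally show ?thesis by simp
qed

lemma indep2I: assumes "x \<noteq> 0" "y \<noteq> 0" "y \<noteq> x" "y \<noteq> - x" shows "indep2 x y"
  unfolding indep2_def all3 using assms
  by (auto simp: smult_simps add_eq_0_iff)

lemma indep3I: assumes "x \<noteq> 0" "y \<noteq> 0" "y \<noteq> x" "y \<noteq> - x" "z \<noteq> 0" "z \<noteq> x" "z \<noteq> - x" "z \<noteq> y" "z \<noteq> - y"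
   "z \<noteq> x + y" "z \<noteq> x - y" "z \<noteq> y - x" "z \<noteq> - x - y"
  shows "indep3 x y z"
  unfolding indep3_def all3 using assms
  by (auto simp: smult_simps add_eq_0_iff)

definition mk :: "3 \<Rightarrow> 3 \<Rightarrow> 3 \<Rightarrow> 3 \<Rightarrow> pt" where
  "mk a b c d = (\<chi> i. if i = 0 then a else if i = 1 then b else if i = 2 then c else d)"
lemma mk_nth[simp]: "mk a b c d $ 0 = a" "mk a b c d $ 1 = b" "mk a b c d $ 2 = c" "mk a b c d $ 3 = d"
  unfolding mk_def by simp_all
lemma mk_eq[simp]: "mk a b c d = mk a' b' c' d' \<longleftrightarrow> a = a' \<and> b = b' \<and> c = c' \<and> d = d'"
  unfolding vec_eq_iff all4 by simp
lemma mk_neg[simp]: "- mk a b c d = mk (-a) (-b) (-c) (-d)"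
  unfolding vec_eq_iff all4 by simp
lemma mk_zero[simp]: "mk a b c d = 0 \<longleftrightarrow> a = 0 \<and> b = 0 \<and> c = 0 \<and> d = 0"
  unfolding vec_eq_iff all4 by simp

definition Qv :: "pt \<Rightarrow> 3" where "Qv x = x$0*x$0 + x$1*x$1 + x$2*x$3"
definition Bv :: "pt \<Rightarrow> pt \<Rightarrow> 3" where "Bv x y = 2*x$0*y$0 + 2*x$1*y$1 + x$2*y$3 + x$3*y$2"

lemma Qv_sum: "Qv (- (x + y)) = Qv x + Qv y + Bv x y"
  unfolding Qv_def Bv_def by (simp add: algebra_simps)

definition D20 :: "pt set" where "D20 = {mk 0 0 0 1, mk 0 0 0 2, mk 0 0 1 0, mk 0 0 2 0, mk 0 1 1 2, mk 0 1 2 1, mk 0 2 1 2, mk 0 2 2 1, mk 1 0 1 2, mk 1 0 2 1, mk 1 1 1 1, mk 1 1 2 2, mk 1 2 1 1, mk 1 2 2 2, mk 2 0 1 2, mk 2 0 2 1, mk 2 1 1 1, mk 2 1 2 2, mk 2 2 1 1, mk 2 2 2 2}"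
lemma D20_card: "card D20 = 20" unfolding D20_def by simp
lemma D20_Q: "\<forall>x\<in>D20. Qv x = 0 \<and> x \<noteq> 0" unfolding D20_def by (simp add: Qv_def)
lemma D20_B: "\<forall>x\<in>D20. \<forall>y\<in>D20. x \<noteq> y \<longrightarrow> x \<noteq> - y \<longrightarrow> Bv x y \<noteq> 0"
  unfolding D20_def Ball_def insert_iff empty_iff by (simp add: Bv_def)

lemma dbl_unused: "(x::pt) + x = - x" using pt3[of x] by (metis add_eq_0_iff add.assoc)

lemma is_line_iff: "is_line {a,b,c} \<longleftrightarrow> a \<noteq> b \<and> a \<noteq> c \<and> b \<noteq> c \<and> a + b + c = 0"
proof
  assume "is_line {a,b,c}"
  then obtain x y z where eq: "{a,b,c} = {x,y,z}" and d: "x \<noteq> y" "x \<noteq> z" "y \<noteq> z" and s: "x + y + z = 0"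
    unfolding is_line_def by blast
  have "card {a,b,c} = 3" using eq d by simp
  then have dd: "a \<noteq> b \<and> a \<noteq> c \<and> b \<noteq> c" by (auto simp: card_insert_if split: if_splits)
  have "sum id {a,b,c} = sum id {x,y,z}" using eq by simp
  then have "a + b + c = x + y + z" using dd d by (simp add: add.assoc)
  then show "a \<noteq> b \<and> a \<noteq> c \<and> b \<noteq> c \<and> a + b + c = 0" using dd s by simp
next
  assume "a \<noteq> b \<and> a \<noteq> c \<and> b \<noteq> c \<and> a + b + c = 0"
  then show "is_line {a,b,c}" unfolding is_line_def by blast
qed

lemma capK: assumes "is_cap K" "a \<in> K" "b \<in> K" "c \<in> K" "a \<noteq> b" "a \<noteq> c" "b \<noteq> c" "a + b + c = 0"
  shows False
  using assms unfolding is_cap_def by (metis is_line_iff empty_subsetI insert_subset)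

definition symcap :: "pt set \<Rightarrow> bool" where
  "symcap K \<longleftrightarrow> is_cap K \<and> 0 \<notin> K \<and> (\<forall>x\<in>K. - x \<in> K)"

lemma sc_facts: "\<forall>a b::3. (a = - a - b \<longleftrightarrow> b = a) \<and> (b = - a - b \<longleftrightarrow> a = b) \<and> (a = b - a \<longleftrightarrow> b = - a)
   \<and> (- b = b - a \<longleftrightarrow> a = - b) \<and> (- a = a - b \<longleftrightarrow> b = - a) \<and> (b = a - b \<longleftrightarrow> a = - b)"
  unfolding all3 by simp

lemma v1: "(x::pt) = - x - y \<longleftrightarrow> y = x" using sc_facts by (simp add: vec_eq_iff)
lemma v2: "(y::pt) = - x - y \<longleftrightarrow> x = y" using sc_facts by (simp add: vec_eq_iff)
lemma v3: "(x::pt) = y - x \<longleftrightarrow> y = - x" using sc_facts by (simp add: vec_eq_iff)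
lemma v4: "- (y::pt) = y - x \<longleftrightarrow> x = - y" using sc_facts by (simp add: vec_eq_iff)
lemma v5: "- (x::pt) = x - y \<longleftrightarrow> y = - x" using sc_facts by (simp add: vec_eq_iff)
lemma v6: "(y::pt) = x - y \<longleftrightarrow> x = - y" using sc_facts by (simp add: vec_eq_iff)

lemma cap_indep3:
  assumes sc: "symcap K" and K: "x \<in> K" "y \<in> K" "z \<in> K" and ny: "y \<noteq> x" "y \<noteq> - x"
    and nz: "z \<noteq> x" "z \<noteq> - x" "z \<noteq> y" "z \<noteq> - y"
  shows "indep3 x y z"
proof -
  have cap: "is_cap K" and n0: "0 \<notin> K" and neg: "\<And>u. u \<in> K \<Longrightarrow> - u \<in> K" using sc by (auto simp: symcap_def)
  have x0: "x \<noteq> 0" "y \<noteq> 0" "z \<noteq> 0" using K n0 by auto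
  have ny': "x \<noteq> - y" using ny by auto
  have a: "z \<noteq> - x - y"
  proof
    assume e: "z = - x - y"
    show False
      by (rule capK[OF cap K(1) K(2) K(3)]) (use e ny in \<open>auto simp: v1 v2\<close>)
  qed
  have b: "z \<noteq> x + y"
  proof
    assume e: "z = x + y"
    then have e': "- z = - x - y" by simp
    show False
      by (rule capK[OF cap K(1) K(2) neg[OF K(3)]]) (use e' ny in \<open>auto simp: v1 v2\<close>)
  qed
  have c: "z \<noteq> x - y"
  proof
    assume e: "z = x - y"
    then have e': "- z = y - x" by simp
    show False
      by (rule capK[OF cap K(1) neg[OF K(2)] neg[OF K(3)]]) (use e' ny ny' in \<open>auto simp: v3 v4\<close>)
  qed
  have d: "z \<noteq> y - x"
  proof
    assume e: "z = y - x"
    then have e': "- z = x - y" by simp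
    show False
      by (rule capK[OF cap neg[OF K(1)] K(2) neg[OF K(3)]]) (use e' ny ny' in \<open>auto simp: v5 v6\<close>)
  qed
  show ?thesis by (rule indep3I) (use x0 ny nz a b c d in auto)
qed


lemma D20_cap: "is_cap D20"
  unfolding is_cap_def
proof (intro allI impI notI)
  fix L assume sub: "L \<subseteq> D20" and "is_line L"
  then obtain x y z where L: "L = {x,y,z}" and d: "x \<noteq> y" "x \<noteq> z" "y \<noteq> z" and s: "x + y + z = 0"
    unfolding is_line_def by blast
  have in3: "x \<in> D20" "y \<in> D20" "z \<in> D20" using sub L by auto
  have z: "z = - (x + y)" using s by (simp add: add_eq_0_iff)
  have "z \<noteq> 0" using D20_Q in3 by auto
  then have nxy: "x \<noteq> - y" using z by auto
  have "Qv z = 0" using D20_Q in3 by auto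
  then have "Bv x y = 0" using D20_Q in3 Qv_sum[of x y] z by simp
  then show False using D20_B in3 d nxy by blast
qed

lemma even_neg_closed:
  fixes A :: "pt set"
  assumes "finite A" "\<forall>x\<in>A. - x \<in> A" "0 \<notin> A"
  shows "even (card A)"
  using assms
proof (induction "card A" arbitrary: A rule: less_induct)
  case less
  show ?case
  proof (cases "A = {}")
    case True then show ?thesis by simp
  next
    case False
    then obtain x where x: "x \<in> A" by blast
    have nx: "- x \<in> A" using less.prems x by auto
    have xn: "x \<noteq> - x" using x less.prems(3) pt_neg by metis
    let ?B = "A - {x, - x}"
    have cB: "card A = card ?B + 2"
      using card_Diff_subset[of "{x,-x}" A] x nx xn less.prems(1) card_mono[OF less.prems(1), of "{x,-x}"]
      by auto
    have "even (card ?B)"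
    proof (rule less.hyps)
      show "card ?B < card A" using cB by simp
      show "finite ?B" using less.prems by simp
      show "\<forall>y\<in>?B. - y \<in> ?B" using less.prems(2) by (auto simp: minus_equation_iff)
      show "0 \<notin> ?B" using less.prems by simp
    qed
    then show ?thesis using cB by simp
  qed
qed

lemma card_filter_int: "finite A \<Longrightarrow> int (card {x\<in>A. P x}) = (\<Sum>x\<in>A. if P x then 1 else 0)"
  by (simp add: sum.If_cases Int_def)

lemma ifmul: "(if A then (1::int) else 0) * (if B then 1 else 0) = (if A \<and> B then 1 else 0)" by simp

lemma mom1: assumes "finite U" "finite K"
  shows "(\<Sum>w\<in>U. int (card {x\<in>K. P w x})) = (\<Sum>x\<in>K. int (card {w\<in>U. P w x}))"
  using assms by (simp add: card_filter_int sum.swap[of _ U])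

lemma mom2: assumes "finite U" "finite K"
  shows "(\<Sum>w\<in>U. (int (card {x\<in>K. P w x}))^2) = (\<Sum>x\<in>K. \<Sum>y\<in>K. int (card {w\<in>U. P w x \<and> P w y}))"
proof -
  have "(\<Sum>w\<in>U. (int (card {x\<in>K. P w x}))^2) = (\<Sum>w\<in>U. \<Sum>x\<in>K. \<Sum>y\<in>K. if P w y \<and> P w x then 1 else 0)"
    using assms by (simp only: card_filter_int power2_eq_square sum_distrib_left sum_distrib_right ifmul)
  also have "\<dots> = (\<Sum>x\<in>K. \<Sum>w\<in>U. \<Sum>y\<in>K. if P w y \<and> P w x then 1 else 0)" by (rule sum.swap)
  also have "\<dots> = (\<Sum>x\<in>K. \<Sum>y\<in>K. \<Sum>w\<in>U. if P w y \<and> P w x then 1 else 0)"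
    by (rule sum.cong[OF refl], rule sum.swap)
  finally show ?thesis using assms by (auto simp: card_filter_int intro!: sum.cong)
qed

lemma mom3: assumes "finite U" "finite K"
  shows "(\<Sum>w\<in>U. (int (card {x\<in>K. P w x}))^3) = (\<Sum>x\<in>K. \<Sum>y\<in>K. \<Sum>z\<in>K. int (card {w\<in>U. P w x \<and> P w y \<and> P w z}))"
proof -
  have p3: "(a::int)^3 = a * a * a" for a by (simp add: power3_eq_cube)
  have "(\<Sum>w\<in>U. (int (card {x\<in>K. P w x}))^3) = (\<Sum>w\<in>U. \<Sum>x\<in>K. \<Sum>y\<in>K. \<Sum>z\<in>K. if P w z \<and> P w y \<and> P w x then 1 else 0)"
    using assms by (simp only: card_filter_int p3 sum_distrib_left sum_distrib_right ifmul conj_assoc)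
  also have "\<dots> = (\<Sum>x\<in>K. \<Sum>w\<in>U. \<Sum>y\<in>K. \<Sum>z\<in>K. if P w z \<and> P w y \<and> P w x then 1 else 0)" by (rule sum.swap)
  also have "\<dots> = (\<Sum>x\<in>K. \<Sum>y\<in>K. \<Sum>w\<in>U. \<Sum>z\<in>K. if P w z \<and> P w y \<and> P w x then 1 else 0)"
    by (rule sum.cong[OF refl], rule sum.swap)
  also have "\<dots> = (\<Sum>x\<in>K. \<Sum>y\<in>K. \<Sum>z\<in>K. \<Sum>w\<in>U. if P w z \<and> P w y \<and> P w x then 1 else 0)"
    by (rule sum.cong[OF refl], rule sum.cong[OF refl], rule sum.swap)
  finally show ?thesis using assms by (auto simp: card_filter_int intro!: sum.cong)
qed

lemma sum_if_int: assumes "finite K"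
  shows "(\<Sum>z\<in>K. if z \<in> A then (a::int) else b) = a * int (card (K \<inter> A)) + b * (int (card K) - int (card (K \<inter> A)))"
proof -
  have "(\<Sum>z\<in>K. if z \<in> A then (a::int) else b) = (\<Sum>z\<in>K \<inter> A. a) + (\<Sum>z\<in>K - A. b)"
    using assms by (simp add: sum.If_cases Diff_eq)
  moreover have "card (K - A) = card K - card (K \<inter> A)" using assms by (simp add: card_Diff_subset_Int)
  moreover have "card (K \<inter> A) \<le> card K" using assms by (simp add: card_mono)
  ultimately show ?thesis by (simp add: of_nat_diff)
qed

lemma symcapD: assumes "symcap K" shows "is_cap K" "0 \<notin> K" "\<And>x. x\<in>K \<Longrightarrow> - x \<in> K"
  using assms by (auto simp: symcap_def)

lemma symcap_ne: assumes "symcap K" "x \<in> K" shows "x \<noteq> 0" "x \<noteq> - x"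
  using assms symcapD(2)[OF assms(1)] pt_neg by metis+

lemma cnt2: assumes sc: "symcap K" and K: "x\<in>K" "y\<in>K"
  shows "card {w. dot w x = 0 \<and> dot w y = 0} = (if y \<in> {x,-x} then 27 else 9)"
proof (cases "y \<in> {x,-x}")
  case True
  then have "{w. dot w x = 0 \<and> dot w y = 0} = {w. dot w x = 0}" by (auto simp: dot_neg_r)
  then show ?thesis using True L1 symcap_ne[OF sc K(1)] by auto
next
  case False
  have "indep2 x y" by (rule indep2I) (use False symcap_ne[OF sc K(1)] symcap_ne[OF sc K(2)] in auto)
  then show ?thesis using False L2 by simp
qed

lemma cnt3: assumes sc: "symcap K" and K: "x\<in>K" "y\<in>K" "z\<in>K"
  shows "card {w. dot w x = 0 \<and> dot w y = 0 \<and> dot w z = 0} =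
    (if y \<in> {x,-x} then (if z \<in> {x,-x} then 27 else 9) else (if z \<in> {x,-x,y,-y} then 9 else 3))"
proof (cases "y \<in> {x,-x}")
  case True
  then have "{w. dot w x = 0 \<and> dot w y = 0 \<and> dot w z = 0} = {w. dot w x = 0 \<and> dot w z = 0}" by (auto simp: dot_neg_r)
  then show ?thesis using True cnt2[OF sc K(1) K(3)] by auto
next
  case False
  show ?thesis
  proof (cases "z \<in> {x,-x,y,-y}")
    case True
    then have "{w. dot w x = 0 \<and> dot w y = 0 \<and> dot w z = 0} = {w. dot w x = 0 \<and> dot w y = 0}" by (auto simp: dot_neg_r)
    then show ?thesis using True False cnt2[OF sc K(1) K(2)] by auto
  next
    case F2: False
    have "indep3 x y z" by (rule cap_indep3[OF sc K]) (use False F2 in auto)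
    then show ?thesis using False F2 L3 by simp
  qed
qed

lemma card2K: assumes sc: "symcap K" and "x \<in> K" shows "card (K \<inter> {x,-x}) = 2"
proof -
  have "K \<inter> {x,-x} = {x,-x}" using assms symcapD(3)[OF sc] by auto
  then show ?thesis using symcap_ne[OF assms] by simp
qed

lemma card4K: assumes sc: "symcap K" and K: "x \<in> K" "y \<in> K" and ny: "y \<notin> {x,-x}"
  shows "card (K \<inter> {x,-x,y,-y}) = 4"
proof -
  have "K \<inter> {x,-x,y,-y} = {x,-x,y,-y}" using K symcapD(3)[OF sc] by auto
  moreover have "x \<noteq> - y" "- x \<noteq> - y" using ny by auto
  ultimately show ?thesis using symcap_ne[OF sc K(1)] symcap_ne[OF sc K(2)] ny by auto
qed

lemma sum2K: assumes sc: "symcap K" and fin: "finite K" and x: "x \<in> K"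
  shows "(\<Sum>y\<in>K. if y \<in> {x,-x} then (a::int) else b) = 2 * a + b * (int (card K) - 2)"
  unfolding sum_if_int[OF fin] card2K[OF sc x] by simp

lemma sum4K: assumes sc: "symcap K" and fin: "finite K" and K: "x \<in> K" "y \<in> K" and ny: "y \<notin> {x,-x}"
  shows "(\<Sum>z\<in>K. if z \<in> {x,-x,y,-y} then (a::int) else b) = 4 * a + b * (int (card K) - 4)"
  unfolding sum_if_int[OF fin] card4K[OF sc K ny] by simp

definition nn :: "pt set \<Rightarrow> pt \<Rightarrow> nat" where "nn K w = card {x\<in>K. dot w x = 0}"

lemma M1: assumes sc: "symcap K" and fin: "finite K"
  shows "(\<Sum>w\<in>UNIV. int (nn K w)) = 27 * int (card K)"
proof -
  have "(\<Sum>w\<in>UNIV. int (nn K w)) = (\<Sum>x\<in>K. int (card {w\<in>UNIV. dot w x = 0}))"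
    unfolding nn_def by (rule mom1) (use fin in auto)
  also have "\<dots> = (\<Sum>x\<in>K. 27)" using L1 symcap_ne[OF sc] by (intro sum.cong) auto
  finally show ?thesis by simp
qed

lemma M2: assumes sc: "symcap K" and fin: "finite K"
  shows "(\<Sum>w\<in>UNIV. int (nn K w)^2) = int (card K) * (9 * int (card K) + 36)"
proof -
  have "(\<Sum>w\<in>UNIV. int (nn K w)^2) = (\<Sum>x\<in>K. \<Sum>y\<in>K. int (card {w\<in>UNIV. dot w x = 0 \<and> dot w y = 0}))"
    unfolding nn_def by (rule mom2) (use fin in auto)
  also have "\<dots> = (\<Sum>x\<in>K. \<Sum>y\<in>K. if y \<in> {x,-x} then 27 else 9)"
    using cnt2[OF sc] by (intro sum.cong refl) simp
  also have "\<dots> = (\<Sum>x\<in>K. 9 * int (card K) + 36)"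
    by (intro sum.cong refl, subst sum2K[OF sc fin], assumption, simp add: algebra_simps)
  finally show ?thesis by (simp add: algebra_simps)
qed

lemma M3: assumes sc: "symcap K" and fin: "finite K"
  shows "(\<Sum>w\<in>UNIV. int (nn K w)^3) = int (card K) * (3 * int (card K)^2 + 36 * int (card K) + 24)"
proof -
  let ?m = "int (card K)"
  have "(\<Sum>w\<in>UNIV. int (nn K w)^3) = (\<Sum>x\<in>K. \<Sum>y\<in>K. \<Sum>z\<in>K. int (card {w\<in>UNIV. dot w x = 0 \<and> dot w y = 0 \<and> dot w z = 0}))"
    unfolding nn_def by (rule mom3) (use fin in auto)
  also have "\<dots> = (\<Sum>x\<in>K. \<Sum>y\<in>K. if y \<in> {x,-x} then 9 * ?m + 36 else 3 * ?m + 24)"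
  proof (intro sum.cong refl)
    fix x y assume x: "x \<in> K" and y: "y \<in> K"
    show "(\<Sum>z\<in>K. int (card {w\<in>UNIV. dot w x = 0 \<and> dot w y = 0 \<and> dot w z = 0})) = (if y \<in> {x,-x} then 9 * ?m + 36 else 3 * ?m + 24)"
    proof (cases "y \<in> {x,-x}")
      case True
      have "(\<Sum>z\<in>K. int (card {w\<in>UNIV. dot w x = 0 \<and> dot w y = 0 \<and> dot w z = 0})) = (\<Sum>z\<in>K. if z \<in> {x,-x} then 27 else 9)"
        using cnt3[OF sc x y] True by (intro sum.cong refl) simp
      also have "\<dots> = 9 * ?m + 36" by (subst sum2K[OF sc fin x]) (simp add: algebra_simps)
      finally show ?thesis using True by simp
    next
      case False
      have "(\<Sum>z\<in>K. int (card {w\<in>UNIV. dot w x = 0 \<and> dot w y = 0 \<and> dot w z = 0})) = (\<Sum>z\<in>K. if z \<in> {x,-x,y,-y} then 9 else 3)"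
        using cnt3[OF sc x y] False by (intro sum.cong refl) simp
      also have "\<dots> = 3 * ?m + 24" by (subst sum4K[OF sc fin x y False]) (simp add: algebra_simps)
      finally show ?thesis using False by simp
    qed
  qed
  also have "\<dots> = (\<Sum>x\<in>K. (9 * ?m + 36) * 2 + (3 * ?m + 24) * (?m - 2))"
    by (intro sum.cong refl, subst sum2K[OF sc fin], assumption, simp)
  finally show ?thesis by (simp add: algebra_simps power2_eq_square)
qed

lemma card_le4: "card {a,b,c,d::'a} \<le> 4"
  using card_length[of "[a,b,c,d]"] by simp
lemma card_le2: "card {a,b::'a} \<le> 2"
  using card_length[of "[a,b]"] by simp

lemma ex_of_card: "card A \<ge> Suc n \<Longrightarrow> \<exists>x. x \<in> A" by (cases "A = {}") auto

lemma planar: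
  assumes sc: "symcap K" and fin: "finite K" and w0: "w \<noteq> 0"
  shows "nn K w \<le> 8"
proof -
  note KK = symcapD[OF sc]
  define D where "D = {x\<in>K. dot w x = 0}"
  define T where "T = UNIV - {0, w, -w}"
  define g where "g v = card {x\<in>D. dot v x = 0}" for v
  have finD: "finite D" using fin D_def by simp
  have finT: "finite T" by simp
  have Dn: "x \<in> D \<Longrightarrow> - x \<in> D" for x using KK(3) by (auto simp: D_def dot_neg_r)
  have DK: "x \<in> D \<Longrightarrow> x \<in> K" for x by (simp add: D_def)
  have Dw: "x \<in> D \<Longrightarrow> dot w x = 0" for x by (simp add: D_def)
  have D0: "x \<in> D \<Longrightarrow> x \<noteq> 0" for x using KK(2) DK by auto
  have wnw: "w \<noteq> - w" using w0 pt_neg by metis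
  have c03: "card {0, w, -w} = 3" using w0 wnw by auto
  have t1: "card {v\<in>T. dot v x = 0} = 24" if x: "x \<in> D" for x
  proof -
    have e: "{v\<in>T. dot v x = 0} = {v. dot v x = 0} - {0,w,-w}" by (auto simp: T_def)
    have s: "{0,w,-w} \<subseteq> {v. dot v x = 0}" using Dw[OF x] by (auto simp: dot_neg_l)
    show ?thesis unfolding e using card_Diff_subset[OF _ s] L1[OF D0[OF x]] c03 by simp
  qed
  have t2: "card {v\<in>T. dot v x = 0 \<and> dot v y = 0} = (if y \<in> {x,-x} then 24 else 6)" if x: "x\<in>D" and y: "y\<in>D" for x y
  proof -
    have e: "{v\<in>T. dot v x = 0 \<and> dot v y = 0} = {v. dot v x = 0 \<and> dot v y = 0} - {0,w,-w}" by (auto simp: T_def)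
    have s: "{0,w,-w} \<subseteq> {v. dot v x = 0 \<and> dot v y = 0}" using Dw[OF x] Dw[OF y] by (auto simp: dot_neg_l)
    have "card {v. dot v x = 0 \<and> dot v y = 0} = (if y \<in> {x,-x} then 27 else 9)"
      by (rule cnt2[OF sc DK[OF x] DK[OF y]])
    then show ?thesis unfolding e using card_Diff_subset[OF _ s] c03 by simp
  qed
  have gle: "g v \<le> 4" if v: "v \<in> T" for v
  proof (rule ccontr)
    assume "\<not> g v \<le> 4"
    define E where "E = {x\<in>D. dot v x = 0}"
    have cE: "card E \<ge> 5" using \<open>\<not> g v \<le> 4\<close> by (simp add: g_def E_def)
    have finE: "finite E" using finD E_def by simp
    have ED: "E \<subseteq> D" by (auto simp: E_def)
    have Ev: "x \<in> E \<Longrightarrow> dot v x = 0" for x by (simp add: E_def)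
    obtain x where x: "x \<in> E" using cE by fastforce
    have "card E - card {x,-x} \<le> card (E - {x,-x})" by (rule diff_card_le_card_Diff) simp
    then have "card (E - {x,-x}) \<ge> 3" using cE card_le2[of x "-x"] by linarith
    then obtain y where y: "y \<in> E - {x,-x}" using ex_of_card[of 2] by auto
    have "card E - card {x,-x,y,-y} \<le> card (E - {x,-x,y,-y})" by (rule diff_card_le_card_Diff) simp
    then have "card (E - {x,-x,y,-y}) \<ge> 1" using cE card_le4[of x "-x" y "-y"] by linarith
    then obtain z where z: "z \<in> E - {x,-x,y,-y}" using ex_of_card[of 0] by auto
    have xK: "x \<in> K" and yK: "y \<in> K" and zK: "z \<in> K" using x y z ED DK by auto
    have "indep3 x y z" by (rule cap_indep3[OF sc xK yK zK]) (use y z in auto)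
    then have c3: "card {u. dot u x = 0 \<and> dot u y = 0 \<and> dot u z = 0} = 3" by (rule L3)
    have sub: "{0, v, w, v + w} \<subseteq> {u. dot u x = 0 \<and> dot u y = 0 \<and> dot u z = 0}"
      using x y z ED Ev Dw by (auto simp: dot_add_l)
    have vT: "v \<noteq> 0" "v \<noteq> w" "v \<noteq> - w" using v by (auto simp: T_def)
    have vw0: "v + w \<noteq> 0" using vT(3) eq_neg_iff_add_eq_0 by blast
    have "card {0, v, w, v + w} = 4" using vT w0 vw0 by auto
    then have "4 \<le> card {u. dot u x = 0 \<and> dot u y = 0 \<and> dot u z = 0}"
      using card_mono[OF _ sub] by simp
    then show False using c3 by simp
  qed
  let ?d = "int (card D)"
  have S1: "(\<Sum>v\<in>T. int (g v)) = 24 * ?d"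
  proof -
    have "(\<Sum>v\<in>T. int (g v)) = (\<Sum>x\<in>D. int (card {v\<in>T. dot v x = 0}))"
      unfolding g_def by (rule mom1[OF finT finD])
    also have "\<dots> = (\<Sum>x\<in>D. 24)" using t1 by (intro sum.cong refl) simp
    finally show ?thesis by simp
  qed
  have card2D: "card (D \<inter> {x,-x}) = 2" if "x \<in> D" for x
  proof -
    have "D \<inter> {x,-x} = {x,-x}" using that Dn by auto
    then show ?thesis using symcap_ne[OF sc DK[OF that]] by simp
  qed
  have S2: "(\<Sum>v\<in>T. int (g v)^2) = ?d * (6 * ?d + 36)"
  proof -
    have "(\<Sum>v\<in>T. int (g v)^2) = (\<Sum>x\<in>D. \<Sum>y\<in>D. int (card {v\<in>T. dot v x = 0 \<and> dot v y = 0}))"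
      unfolding g_def by (rule mom2[OF finT finD])
    also have "\<dots> = (\<Sum>x\<in>D. \<Sum>y\<in>D. if y \<in> {x,-x} then 24 else 6)"
      using t2 by (intro sum.cong refl) simp
    also have "\<dots> = (\<Sum>x\<in>D. 6 * ?d + 36)"
    proof (intro sum.cong refl)
      fix x assume x: "x \<in> D"
      show "(\<Sum>y\<in>D. if y \<in> {x,-x} then 24 else 6) = 6 * ?d + 36"
        unfolding sum_if_int[OF finD] card2D[OF x] by simp
    qed
    finally show ?thesis by (simp add: algebra_simps)
  qed
  have ineq: "(\<Sum>v\<in>T. int (g v)^2) \<le> (\<Sum>v\<in>T. 4 * int (g v))"
  proof (rule sum_mono)
    fix v assume "v \<in> T"
    then have "int (g v) \<le> 4" using gle by simp
    then have "int (g v) * int (g v) \<le> 4 * int (g v)" by (simp add: mult_right_mono)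
    then show "int (g v)^2 \<le> 4 * int (g v)" by (simp add: power2_eq_square)
  qed
  then have ineq2: "?d * (6 * ?d + 36) \<le> 96 * ?d" using S1 S2 by (simp add: sum_distrib_left[symmetric])
  have d10: "card D \<le> 10"
  proof (rule ccontr)
    assume "\<not> card D \<le> 10"
    then have "?d \<ge> 11" by simp
    then have "?d * (6 * ?d + 36) \<ge> ?d * 102" by (intro mult_left_mono) auto
    then show False using ineq2 \<open>?d \<ge> 11\<close> by linarith
  qed
  have evD: "even (card D)" by (rule even_neg_closed) (use finD Dn D0 in auto)
  show ?thesis
  proof (rule ccontr)
    assume "\<not> nn K w \<le> 8"
    then have d: "card D = 10" using d10 evD by (auto simp: nn_def D_def elim!: evenE)
    have z: "(\<Sum>v\<in>T. 4 * int (g v) - int (g v)^2) = 0"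
      using S1 S2 d by (simp add: sum_subtractf sum_distrib_left[symmetric])
    have nn0: "\<forall>v\<in>T. 4 * int (g v) - int (g v)^2 \<ge> 0" using ineq
    proof -
      show ?thesis
      proof
        fix v assume "v \<in> T"
        then have "int (g v) \<le> 4" using gle by simp
        then have "int (g v) * int (g v) \<le> 4 * int (g v)" by (simp add: mult_right_mono)
        then show "4 * int (g v) - int (g v)^2 \<ge> 0" by (simp add: power2_eq_square)
      qed
    qed
    have all0: "\<forall>v\<in>T. 4 * int (g v) - int (g v)^2 = 0"
      using z sum_nonneg_eq_0_iff[OF finT, of "\<lambda>v. 4 * int (g v) - int (g v)^2"] nn0 by simp
    have g04: "g v = 0 \<or> g v = 4" if "v \<in> T" for v
    proof -
      have "4 * int (g v) - int (g v)^2 = 0" using all0 that by blast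
      then have "int (g v) * (4 - int (g v)) = 0" by (simp add: algebra_simps power2_eq_square)
      then show ?thesis by auto
    qed
    have c27: "card {u. dot w u = 0} = 27" using L1[OF w0] by (simp add: dot_comm)
    have "card (D \<union> {0}) \<le> 11" using d card_Un_le[of D "{0}"] by simp
    moreover have "finite (D \<union> {0})" using finD by simp
    ultimately have "\<not> {u. dot w u = 0} \<subseteq> D \<union> {0}"
      using c27 card_mono[of "D \<union> {0}" "{u. dot w u = 0}"] by linarith
    then obtain x0 where x0: "dot w x0 = 0" "x0 \<notin> D" "x0 \<noteq> 0" by auto
    have x0K: "x0 \<notin> K" using x0 by (auto simp: D_def)
    have nx0K: "- x0 \<notin> K" using x0K KK(3) by force
    define B where "B = {v\<in>T. dot v x0 = 0}"
    have finB: "finite B" by simp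
    have BT: "B \<subseteq> T" by (auto simp: B_def)
    have tB: "card {v\<in>B. dot v x = 0} = 6" if x: "x \<in> D" for x
    proof -
      have e: "{v\<in>B. dot v x = 0} = {v. dot v x0 = 0 \<and> dot v x = 0} - {0,w,-w}" by (auto simp: B_def T_def)
      have s: "{0,w,-w} \<subseteq> {v. dot v x0 = 0 \<and> dot v x = 0}" using Dw[OF x] x0(1) by (auto simp: dot_neg_l)
      have "indep2 x0 x"
        by (rule indep2I) (use x0 D0[OF x] DK[OF x] x0K nx0K in auto)
      then have "card {v. dot v x0 = 0 \<and> dot v x = 0} = 9" by (rule L2)
      then show ?thesis unfolding e using card_Diff_subset[OF _ s] c03 by simp
    qed
    have SB: "(\<Sum>v\<in>B. int (g v)) = 60"
    proof -
      have "(\<Sum>v\<in>B. int (g v)) = (\<Sum>x\<in>D. int (card {v\<in>B. dot v x = 0}))"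
        unfolding g_def by (rule mom1[OF finB finD])
      also have "\<dots> = (\<Sum>x\<in>D. 6)" using tB by (intro sum.cong refl) simp
      finally show ?thesis using d by simp
    qed
    define C where "C = {v\<in>B. g v = 4}"
    have "(\<Sum>v\<in>B. int (g v)) = (\<Sum>v\<in>B. if g v = 4 then 4 else 0)"
      using g04 BT by (intro sum.cong refl) force
    also have "\<dots> = 4 * int (card C)" unfolding C_def
      by (simp add: sum.If_cases Int_def)
    finally have "int (card C) * 4 = 60" using SB by simp
    then have c15: "card C = 15" by simp
    have gneg: "g (- v) = g v" for v unfolding g_def by (simp add: dot_neg_l)
    have "even (card C)"
    proof (rule even_neg_closed)
      show "finite C" by (simp add: C_def)
      show "\<forall>x\<in>C. - x \<in> C"
        by (auto simp: C_def B_def T_def gneg dot_neg_l minus_equation_iff)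
      show "0 \<notin> C" by (simp add: C_def B_def T_def)
    qed
    then show False using c15 by simp
  qed
qed

lemma nn0: "nn K 0 = card K" by (simp add: nn_def)

lemma main_bound:
  assumes sc: "symcap K" and fin: "finite K" and ge: "card K \<ge> 20"
  shows "card K = 20 \<and> (\<forall>w. w \<noteq> 0 \<longrightarrow> nn K w = 2 \<or> nn K w = 8)"
proof -
  define n where "n w = int (nn K w)" for w
  define m where "m = int (card K)"
  define p where "p t = (t - 2)^2 * (8 - t)" for t :: int
  have pe: "p t = 12 * t^2 - t^3 - 36 * t + 32" for t
    by (simp add: p_def algebra_simps power2_eq_square power3_eq_cube)
  have all: "(\<Sum>w\<in>UNIV. p (n w)) = 12 * (\<Sum>w\<in>UNIV. n w^2) - (\<Sum>w\<in>UNIV. n w^3) - 36 * (\<Sum>w\<in>UNIV. n w) + 32 * 81"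
    by (simp add: pe sum.distrib sum_subtractf sum_distrib_left)
  have all2: "(\<Sum>w\<in>UNIV. p (n w)) = 12 * (m * (9 * m + 36)) - m * (3 * m^2 + 36 * m + 24) - 36 * (27 * m) + 32 * 81"
    using all unfolding n_def m_def by (simp add: M1[OF sc fin] M2[OF sc fin] M3[OF sc fin])
  have split: "(\<Sum>w\<in>UNIV. p (n w)) = p m + (\<Sum>w\<in>UNIV - {0::pt}. p (n w))"
    by (subst sum.remove[of "UNIV::pt set" 0]) (auto simp: n_def m_def nn0)
  have nonneg: "(\<Sum>w\<in>UNIV - {0::pt}. p (n w)) \<ge> 0"
  proof (rule sum_nonneg)
    fix w assume "w \<in> UNIV - {0::pt}"
    then have "n w \<le> 8" using planar[OF sc fin] by (simp add: n_def)
    then show "p (n w) \<ge> 0" by (simp add: p_def)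
  qed
  have F: "(\<Sum>w\<in>UNIV - {0::pt}. p (n w)) = - 2 * (m - 20) * ((m - 5)^2 + 39)"
    using all2 split by (simp add: p_def algebra_simps power2_eq_square power3_eq_cube)
  have m20: "m = 20"
  proof (rule ccontr)
    assume "m \<noteq> 20"
    then have "m > 20" using ge by (simp add: m_def)
    moreover have "(m - 5)^2 + 39 > 0" by (simp add: add_nonneg_pos)
    ultimately have "(m - 20) * ((m - 5)^2 + 39) > 0" by (intro mult_pos_pos) auto
    then show False using F nonneg by linarith
  qed
  then have z: "(\<Sum>w\<in>UNIV - {0::pt}. p (n w)) = 0" using F by simp
  have each: "\<forall>w\<in>UNIV - {0::pt}. p (n w) = 0"
  proof -
    have nn': "\<And>w. w \<in> UNIV - {0::pt} \<Longrightarrow> 0 \<le> p (n w)"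
    proof -
      fix w assume "w \<in> UNIV - {0::pt}"
      then have "n w \<le> 8" using planar[OF sc fin] by (simp add: n_def)
      then show "0 \<le> p (n w)" by (simp add: p_def)
    qed
    show ?thesis using z sum_nonneg_eq_0_iff[of "UNIV - {0::pt}" "\<lambda>w. p (n w)"] nn' by simp
  qed
  have "nn K w = 2 \<or> nn K w = 8" if "w \<noteq> 0" for w
  proof -
    have "(n w - 2)^2 * (8 - n w) = 0" using each that by (simp add: p_def)
    then have "n w = 2 \<or> n w = 8" by auto
    then show ?thesis by (auto simp: n_def)
  qed
  then show ?thesis using m20 by (simp add: m_def)
qed

lemma ww0: "(x = - p - x) \<longleftrightarrow> (p = x)" for p x :: pt
proof -
  have h: "\<forall>a b::3. (a = - b - a) \<longleftrightarrow> (b = a)" by (simp add: all3)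
  show ?thesis by (simp only: vec_eq_iff vector_add_component vector_minus_component vector_uminus_component zero_index h)
qed
lemma ww1: "(x = p - x) \<longleftrightarrow> (p = - x)" for p x :: pt
proof -
  have h: "\<forall>a b::3. (a = b - a) \<longleftrightarrow> (b = - a)" by (simp add: all3)
  show ?thesis by (simp only: vec_eq_iff vector_add_component vector_minus_component vector_uminus_component zero_index h)
qed
lemma ww2: "(- x = p + x) \<longleftrightarrow> (p = x)" for p x :: pt
proof -
  have h: "\<forall>a b::3. (- a = b + a) \<longleftrightarrow> (b = a)" by (simp add: all3)
  show ?thesis by (simp only: vec_eq_iff vector_add_component vector_minus_component vector_uminus_component zero_index h)
qed
lemma ww3: "(- x = x - p) \<longleftrightarrow> (p = - x)" for p x :: pt
proof -
  have h: "\<forall>a b::3. (- a = a - b) \<longleftrightarrow> (b = - a)" by (simp add: all3)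
  show ?thesis by (simp only: vec_eq_iff vector_add_component vector_minus_component vector_uminus_component zero_index h)
qed
lemma ww4: "(p + x = - p - x) \<longleftrightarrow> (x = - p)" for p x :: pt
proof -
  have h: "\<forall>a b::3. (b + a = - b - a) \<longleftrightarrow> (a = - b)" by (simp add: all3)
  show ?thesis by (simp only: vec_eq_iff vector_add_component vector_minus_component vector_uminus_component zero_index h)
qed
lemma ww5: "(p + x = p - x) \<longleftrightarrow> (x = 0)" for p x :: pt
proof -
  have h: "\<forall>a b::3. (b + a = b - a) \<longleftrightarrow> (a = 0)" by (simp add: all3)
  show ?thesis by (simp only: vec_eq_iff vector_add_component vector_minus_component vector_uminus_component zero_index h)
qed
lemma ww6: "(p + x = x - p) \<longleftrightarrow> (p = 0)" for p x :: pt
proof -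
  have h: "\<forall>a b::3. (b + a = a - b) \<longleftrightarrow> (b = 0)" by (simp add: all3)
  show ?thesis by (simp only: vec_eq_iff vector_add_component vector_minus_component vector_uminus_component zero_index h)
qed
lemma ww7: "(- p - x = p - x) \<longleftrightarrow> (p = 0)" for p x :: pt
proof -
  have h: "\<forall>a b::3. (- b - a = b - a) \<longleftrightarrow> (b = 0)" by (simp add: all3)
  show ?thesis by (simp only: vec_eq_iff vector_add_component vector_minus_component vector_uminus_component zero_index h)
qed
lemma ww8: "(- p - x = x - p) \<longleftrightarrow> (x = 0)" for p x :: pt
proof -
  have h: "\<forall>a b::3. (- b - a = a - b) \<longleftrightarrow> (a = 0)" by (simp add: all3)
  show ?thesis by (simp only: vec_eq_iff vector_add_component vector_minus_component vector_uminus_component zero_index h)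
qed
lemma ww9: "(p - x = x - p) \<longleftrightarrow> (p = x)" for p x :: pt
proof -
  have h: "\<forall>a b::3. (b - a = a - b) \<longleftrightarrow> (b = a)" by (simp add: all3)
  show ?thesis by (simp only: vec_eq_iff vector_add_component vector_minus_component vector_uminus_component zero_index h)
qed
lemma ww10: "(x = p + x) \<longleftrightarrow> (p = 0)" for p x :: pt
proof -
  have h: "\<forall>a b::3. (a = b + a) \<longleftrightarrow> (b = 0)" by (simp add: all3)
  show ?thesis by (simp only: vec_eq_iff vector_add_component vector_minus_component vector_uminus_component zero_index h)
qed
lemma ww11: "(x = x - p) \<longleftrightarrow> (p = 0)" for p x :: pt
proof -
  have h: "\<forall>a b::3. (a = a - b) \<longleftrightarrow> (b = 0)" by (simp add: all3)
  show ?thesis by (simp only: vec_eq_iff vector_add_component vector_minus_component vector_uminus_component zero_index h)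
qed
lemma ww12: "(- x = - p - x) \<longleftrightarrow> (p = 0)" for p x :: pt
proof -
  have h: "\<forall>a b::3. (- a = - b - a) \<longleftrightarrow> (b = 0)" by (simp add: all3)
  show ?thesis by (simp only: vec_eq_iff vector_add_component vector_minus_component vector_uminus_component zero_index h)
qed
lemma ww13: "(- x = p - x) \<longleftrightarrow> (p = 0)" for p x :: pt
proof -
  have h: "\<forall>a b::3. (- a = b - a) \<longleftrightarrow> (b = 0)" by (simp add: all3)
  show ?thesis by (simp only: vec_eq_iff vector_add_component vector_minus_component vector_uminus_component zero_index h)
qed
lemma ww14: "(x = - x) \<longleftrightarrow> (x = 0)" for p x :: pt
proof -
  have h: "\<forall>a::3. (a = - a) \<longleftrightarrow> (a = 0)" by (simp add: all3)
  show ?thesis by (simp only: vec_eq_iff vector_add_component vector_minus_component vector_uminus_component zero_index h)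
qed

lemma six_distinct:
  fixes p x :: pt
  assumes "p \<noteq> 0" "x \<noteq> 0" "x \<noteq> p" "x \<noteq> - p"
  shows "x \<noteq> - x" "x \<noteq> p + x" "x \<noteq> - p - x" "x \<noteq> p - x" "x \<noteq> x - p"
        "- x \<noteq> p + x" "- x \<noteq> - p - x" "- x \<noteq> p - x" "- x \<noteq> x - p"
        "p + x \<noteq> - p - x" "p + x \<noteq> p - x" "p + x \<noteq> x - p"
        "- p - x \<noteq> p - x" "- p - x \<noteq> x - p" "p - x \<noteq> x - p"
  using assms by (simp_all only: ww0 ww1 ww2 ww3 ww4 ww5 ww6 ww7 ww8 ww9 ww10 ww11 ww12 ww13 ww14) auto

lemma final_r:
  assumes sc: "symcap K" and fin: "finite K" and c20: "card K = 20"
    and nw: "\<forall>w. w \<noteq> 0 \<longrightarrow> nn K w = 2 \<or> nn K w = 8"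
    and p0: "p \<noteq> 0" and pK: "p \<notin> K"
  shows "card {x\<in>K. p + x \<in> K} = 6"
proof -
  note KK = symcapD[OF sc]
  have npK: "- p \<notin> K" using pK KK(3) by force
  define W where "W = {w. dot w p = 0}"
  have finW: "finite W" by simp
  have cW: "card W = 27" unfolding W_def by (rule L1[OF p0])
  have W0: "0 \<in> W" by (simp add: W_def)
  define n where "n w = int (nn K w)" for w
  define r where "r = card {x\<in>K. p + x \<in> K}"
  have xK: "x \<noteq> 0" "x \<noteq> p" "x \<noteq> - p" if "x \<in> K" for x
    using that KK(2) pK npK by auto
  have S1: "(\<Sum>w\<in>W. n w) = 180"
  proof -
    have "(\<Sum>w\<in>W. n w) = (\<Sum>x\<in>K. int (card {w\<in>W. dot w x = 0}))"
      unfolding n_def nn_def by (rule mom1[OF finW fin])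
    also have "\<dots> = (\<Sum>x\<in>K. 9)"
    proof (intro sum.cong refl)
      fix x assume x: "x \<in> K"
      have "indep2 p x" by (rule indep2I) (use p0 xK[OF x] in auto)
      then have "card {w. dot w p = 0 \<and> dot w x = 0} = 9" by (rule L2)
      then show "int (card {w\<in>W. dot w x = 0}) = 9" by (simp add: W_def)
    qed
    finally show ?thesis using c20 by simp
  qed
  define A where "A x = {x, -x, p + x, - p - x, p - x, x - p}" for x
  have cxy: "card {w\<in>W. dot w x = 0 \<and> dot w y = 0} = (if y \<in> A x then 9 else 3)" if x: "x \<in> K" and y: "y \<in> K" for x y
  proof -
    have ip: "indep2 p x" by (rule indep2I) (use p0 xK[OF x] in auto)
    show ?thesis
    proof (cases "y \<in> A x")
      case True
      then have "{w\<in>W. dot w x = 0 \<and> dot w y = 0} = {w. dot w p = 0 \<and> dot w x = 0}"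
        by (auto simp: W_def A_def dot_add_r dot_diff_r dot_neg_r)
      then show ?thesis using True L2[OF ip] by simp
    next
      case False
      have "indep3 p x y" by (rule indep3I) (use False p0 xK[OF x] xK[OF y] in \<open>auto simp: A_def\<close>)
      then have "card {w. dot w p = 0 \<and> dot w x = 0 \<and> dot w y = 0} = 3" by (rule L3)
      moreover have "{w\<in>W. dot w x = 0 \<and> dot w y = 0} = {w. dot w p = 0 \<and> dot w x = 0 \<and> dot w y = 0}"
        by (auto simp: W_def)
      ultimately show ?thesis using False by simp
    qed
  qed
  have ind: "(if t \<in> K then 1 else 0) = (if - t \<in> K then 1 else (0::int))" for t
    using KK(3) by force
  have aK: "int (card (K \<inter> A x)) = 2 + 2 * (if p + x \<in> K then 1 else 0) + 2 * (if p - x \<in> K then 1 else 0)"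
    if x: "x \<in> K" for x
  proof -
    note d = six_distinct[OF p0 xK[OF x]]
    have "K \<inter> A x = {t\<in>A x. t \<in> K}" by auto
    then have "int (card (K \<inter> A x)) = int (card {t\<in>A x. t \<in> K})" by simp
    also have "\<dots> = (\<Sum>t\<in>A x. if t \<in> K then 1 else 0)" by (rule card_filter_int) (simp add: A_def)
    also have "\<dots> = (if x \<in> K then 1 else 0) + (if - x \<in> K then 1 else 0) + (if p + x \<in> K then 1 else 0)
       + (if - p - x \<in> K then 1 else 0) + (if p - x \<in> K then 1 else 0) + (if x - p \<in> K then 1 else 0)"
      unfolding A_def using d by (simp add: add.assoc)
    also have "\<dots> = 2 + 2 * (if p + x \<in> K then 1 else 0) + 2 * (if p - x \<in> K then 1 else 0)"
      using x KK(3) ind[of "p + x"] ind[of "p - x"] by simp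
    finally show ?thesis .
  qed
  have uK: "uminus ` K = K" using KK(3) by force
  have refl_sum: "(\<Sum>x\<in>K. if p - x \<in> K then 1 else (0::int)) = (\<Sum>x\<in>K. if p + x \<in> K then 1 else 0)"
  proof -
    have "(\<Sum>x\<in>K. if p + x \<in> K then 1 else (0::int)) = (\<Sum>x\<in>uminus ` K. if p + x \<in> K then 1 else 0)"
      by (simp only: uK)
    also have "\<dots> = (\<Sum>x\<in>K. if p + - x \<in> K then 1 else 0)"
      by (subst sum.reindex) (auto simp: inj_on_def)
    finally show ?thesis by simp
  qed
  have rsum: "(\<Sum>x\<in>K. if p + x \<in> K then 1 else (0::int)) = int r"
    unfolding r_def by (rule card_filter_int[symmetric, OF fin])
  have S2: "(\<Sum>w\<in>W. n w ^ 2) = 1440 + 24 * int r"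
  proof -
    have "(\<Sum>w\<in>W. n w ^ 2) = (\<Sum>x\<in>K. \<Sum>y\<in>K. int (card {w\<in>W. dot w x = 0 \<and> dot w y = 0}))"
      unfolding n_def nn_def by (rule mom2[OF finW fin])
    also have "\<dots> = (\<Sum>x\<in>K. \<Sum>y\<in>K. if y \<in> A x then 9 else 3)"
      using cxy by (intro sum.cong refl) simp
    also have "\<dots> = (\<Sum>x\<in>K. 72 + 12 * (if p + x \<in> K then 1 else 0) + 12 * (if p - x \<in> K then 1 else 0))"
    proof (intro sum.cong refl)
      fix x assume x: "x \<in> K"
      show "(\<Sum>y\<in>K. if y \<in> A x then 9 else 3) = (72 + 12 * (if p + x \<in> K then 1 else 0) + 12 * (if p - x \<in> K then 1 else (0::int)))"
        unfolding sum_if_int[OF fin] aK[OF x] c20 by simp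
    qed
    also have "\<dots> = 72 * 20 + 12 * (\<Sum>x\<in>K. if p + x \<in> K then 1 else 0) + 12 * (\<Sum>x\<in>K. if p - x \<in> K then 1 else (0::int))"
      using c20 by (simp add: sum.distrib sum_distrib_left)
    finally show ?thesis unfolding refl_sum rsum by simp
  qed
  define W' where "W' = W - {0}"
  have finW': "finite W'" by (simp add: W'_def)
  have cW': "card W' = 26" using cW W0 by (simp add: W'_def)
  have n0: "n 0 = 20" using c20 by (simp add: n_def nn0)
  have S1': "(\<Sum>w\<in>W'. n w) = 160"
    using S1 sum.remove[OF finW W0, of n] n0 by (simp add: W'_def)
  have S2': "(\<Sum>w\<in>W'. n w ^ 2) = 1040 + 24 * int r"
    using S2 sum.remove[OF finW W0, of "\<lambda>w. n w ^ 2"] n0 by (simp add: W'_def)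
  have sq: "n w ^ 2 = 10 * n w - 16" if "w \<in> W'" for w
  proof -
    have "w \<noteq> 0" using that by (simp add: W'_def)
    then have "n w = 2 \<or> n w = 8" using nw by (auto simp: n_def)
    then show ?thesis by auto
  qed
  have "(\<Sum>w\<in>W'. n w ^ 2) = (\<Sum>w\<in>W'. 10 * n w - 16)" using sq by (rule sum.cong[OF refl])
  also have "\<dots> = 10 * 160 - 16 * 26" using S1' cW' by (simp add: sum_subtractf sum_distrib_left[symmetric])
  finally have "1040 + 24 * int r = 1184" using S2' by simp
  then have "r = 6" by simp
  then show ?thesis by (simp add: r_def)
qed

lemma vid1: "- ((- p - x) - a) = (p - a) + (x - (a::pt))"
proof -
  have h: "\<forall>u v c::3. - ((- u - v) - c) = (u - c) + (v - c)" by (simp add: all3)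
  show ?thesis by (simp only: vec_eq_iff vector_add_component vector_minus_component vector_uminus_component h simp_thms)
qed
lemma vid2: "(- a - b) - a = - (b - (a::pt))"
proof -
  have h: "\<forall>a b::3. (- a - b) - a = - (b - a)" by (simp add: all3)
  show ?thesis by (simp only: vec_eq_iff vector_add_component vector_minus_component vector_uminus_component h simp_thms)
qed
lemma vid3: "(p::pt) = - p - x \<longleftrightarrow> x = p"
proof -
  have h: "\<forall>a b::3. (b = - b - a) \<longleftrightarrow> (a = b)" by (simp add: all3)
  show ?thesis by (simp only: vec_eq_iff vector_add_component vector_minus_component vector_uminus_component h simp_thms)
qed
lemma vid4: "(x::pt) + y + z = 0 \<Longrightarrow> z = - x - y"
  by (simp add: add_eq_0_iff)

lemma pair_card:
  fixes A :: "pt set"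
  assumes fin: "finite A" and cl: "\<forall>e\<in>A. - q - e \<in> A \<and> - q - e \<noteq> e"
  shows "2 * card ((\<lambda>e. {e, - q - e}) ` A) = card A"
proof -
  let ?P = "(\<lambda>e. {e, - q - e}) ` A"
  have U: "\<Union>?P = A" using cl by auto
  have qq: "- q - (- q - e) = e" for e :: pt by (simp add: algebra_simps)
  have rep: "t \<in> {e, - q - e} \<Longrightarrow> {e, - q - e} = {t, - q - t}" for e t using qq[of e] by auto
  have "2 * card ?P = card (\<Union>?P)"
  proof (rule card_partition)
    show "finite ?P" using fin by simp
    show "finite (\<Union>?P)" using U fin by simp
    show "\<And>c. c \<in> ?P \<Longrightarrow> card c = 2" using cl by auto
    show "\<And>c1 c2. c1 \<in> ?P \<Longrightarrow> c2 \<in> ?P \<Longrightarrow> c1 \<noteq> c2 \<Longrightarrow> c1 \<inter> c2 = {}"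
    proof -
      fix c1 c2 assume c1: "c1 \<in> ?P" and c2: "c2 \<in> ?P" and ne: "c1 \<noteq> c2"
      show "c1 \<inter> c2 = {}"
      proof (rule ccontr)
        assume "c1 \<inter> c2 \<noteq> {}"
        then obtain t where t: "t \<in> c1" "t \<in> c2" by auto
        obtain e1 where e1: "c1 = {e1, - q - e1}" using c1 by auto
        obtain e2 where e2: "c2 = {e2, - q - e2}" using c2 by auto
        have "c1 = {t, - q - t}" using rep t(1) e1 by metis
        moreover have "c2 = {t, - q - t}" using rep t(2) e2 by metis
        ultimately show False using ne by simp
      qed
    qed
  qed
  then show ?thesis using U by simp
qed

lemma cap_transl:
  assumes "is_cap C" shows "is_cap ((\<lambda>x. x - a) ` C)"
  unfolding is_cap_def
proof (intro allI impI notI)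
  fix L assume sub: "L \<subseteq> (\<lambda>x. x - a) ` C" and "is_line L"
  then obtain x y z where L: "L = {x,y,z}" and d: "x \<noteq> y" "x \<noteq> z" "y \<noteq> z" and s: "x + y + z = 0"
    unfolding is_line_def by blast
  have "{x + a, y + a, z + a} \<subseteq> C" using sub L by auto
  moreover have "is_line {x + a, y + a, z + a}"
  proof -
    have "(x + a) + (y + a) + (z + a) = (x + y + z) + (a + a + a)" by (simp add: algebra_simps)
    then have "(x + a) + (y + a) + (z + a) = 0" using s pt3[of a] by simp
    then show ?thesis using d by (simp add: is_line_iff)
  qed
  ultimately show False using assms unfolding is_cap_def by blast
qed

theorem proposition3p1:
  fixes C :: "pt set" and a :: pt
  assumes "is_maximal_cap C" and "is_anchor a C"
  shows "(\<exists>S. card S = 10 \<and> (\<forall>P\<in>S. a_line a P) \<and> \<Union>S = C)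
         \<and> (\<forall>p. p \<notin> C \<and> p \<noteq> a \<longrightarrow> lines_completed p C = 3)"
proof -
  have capC: "is_cap C" and maxC: "\<And>D. is_cap D \<Longrightarrow> card D \<le> card C"
    using assms(1) unfolding is_maximal_cap_def by auto
  have aC: "a \<notin> C" and anc: "C = \<Union>{P. a_line a P \<and> P \<subseteq> C}"
    using assms(2) unfolding is_anchor_def by auto
  have finC: "finite C" by simp
  have symm: "- a - b \<in> C" if b: "b \<in> C" for b
  proof -
    obtain P where P: "a_line a P" "P \<subseteq> C" "b \<in> P" using b anc by blast
    then obtain b' c' where bc: "P = {b', c'}" "b' \<noteq> c'" "is_line {a, b', c'}" unfolding a_line_def by blast
    have s: "a + b' + c' = 0" using bc(3) by (simp add: is_line_iff)
    have c': "c' = - a - b'" using vid4[OF s] .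
    have b': "b' = - a - c'" using c' by (simp add: algebra_simps)
    have inC: "b' \<in> C" "c' \<in> C" using P(2) bc(1) by auto
    have "b = b' \<or> b = c'" using P(3) bc(1) by auto
    then show ?thesis
    proof
      assume "b = b'" then show ?thesis using c' inC by simp
    next
      assume "b = c'" then show ?thesis using b' inC by simp
    qed
  qed
  have nself: "- a - b \<noteq> b" if b: "b \<in> C" for b
    using aC b ww0[of b a] by auto
  define K where "K = (\<lambda>x. x - a) ` C"
  have finK: "finite K" by simp
  have cK: "card K = card C" unfolding K_def by (rule card_image) (simp add: inj_on_def)
  have scK: "symcap K" unfolding symcap_def
  proof (intro conjI ballI)
    show "is_cap K" unfolding K_def by (rule cap_transl[OF capC])
    show "0 \<notin> K" using aC by (auto simp: K_def)
    fix y assume "y \<in> K"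
    then obtain b where b: "b \<in> C" "y = b - a" by (auto simp: K_def)
    have "(- a - b) - a = - y" using b(2) vid2 by simp
    then show "- y \<in> K" using symm[OF b(1)] unfolding K_def by (metis image_eqI)
  qed
  have "card D20 \<le> card C" by (rule maxC[OF D20_cap])
  then have "card K \<ge> 20" using cK D20_card by simp
  then have mb: "card K = 20 \<and> (\<forall>w. w \<noteq> 0 \<longrightarrow> nn K w = 2 \<or> nn K w = 8)"
    using main_bound[OF scK finK] by blast
  have c20: "card C = 20" using mb cK by simp
  define S where "S = (\<lambda>e. {e, - a - e}) ` C"
  have part1: "card S = 10 \<and> (\<forall>P\<in>S. a_line a P) \<and> \<Union>S = C"
  proof (intro conjI)
    have "2 * card S = card C" unfolding S_def
      by (rule pair_card[OF finC]) (use symm nself in auto)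
    then show "card S = 10" using c20 by simp
    show "\<forall>P\<in>S. a_line a P"
    proof
      fix P assume "P \<in> S"
      then obtain e where e: "e \<in> C" "P = {e, - a - e}" by (auto simp: S_def)
      have "is_line {a, e, - a - e}"
        unfolding is_line_iff using e(1) aC nself[OF e(1)] symm[OF e(1)] vid3[of a e] by auto
      then show "a_line a P" unfolding a_line_def using e nself[OF e(1)]
        by (intro exI[of _ e] exI[of _ "- a - e"]) auto
    qed
    show "\<Union>S = C" using symm by (auto simp: S_def)
  qed
  have part2: "lines_completed p C = 3" if p: "p \<notin> C" "p \<noteq> a" for p
  proof -
    define p' where "p' = p - a"
    have p'0: "p' \<noteq> 0" using p by (simp add: p'_def)
    have p'K: "p' \<notin> K" using p by (auto simp: p'_def K_def)
    have six: "card {x\<in>K. p' + x \<in> K} = 6"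
      using final_r[OF scK finK _ _ p'0 p'K] mb by blast
    define A where "A = {x\<in>C. - p - x \<in> C}"
    have KC: "z - a \<in> K \<longleftrightarrow> z \<in> C" for z by (auto simp: K_def)
    have negK: "- z \<in> K \<longleftrightarrow> z \<in> K" for z using symcapD(3)[OF scK] by force
    have imA: "(\<lambda>x. x - a) ` A = {x\<in>K. p' + x \<in> K}"
    proof
      show "(\<lambda>x. x - a) ` A \<subseteq> {x\<in>K. p' + x \<in> K}"
      proof
        fix y assume "y \<in> (\<lambda>x. x - a) ` A"
        then obtain x where x: "x \<in> C" "- p - x \<in> C" "y = x - a" by (auto simp: A_def)
        have h1: "(- p - x) - a \<in> K" using x(2) KC by blast
        have "- ((- p - x) - a) \<in> K" using negK[of "(- p - x) - a"] h1 by blast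
        moreover have e: "p' + y = - ((- p - x) - a)" unfolding p'_def x(3) by (rule vid1[symmetric])
        moreover have "y \<in> K" using x(1) x(3) KC by blast
        ultimately show "y \<in> {x\<in>K. p' + x \<in> K}" by simp
      qed
      show "{x\<in>K. p' + x \<in> K} \<subseteq> (\<lambda>x. x - a) ` A"
      proof
        fix y assume y: "y \<in> {x\<in>K. p' + x \<in> K}"
        then obtain x where x: "x \<in> C" "y = x - a" by (auto simp: K_def)
        have e: "p' + y = - ((- p - x) - a)" unfolding p'_def x(2) by (rule vid1[symmetric])
        have "- ((- p - x) - a) \<in> K" using y e by simp
        then have "(- p - x) - a \<in> K" using negK[of "(- p - x) - a"] by blast
        then have "- p - x \<in> C" using KC by blast
        then show "y \<in> (\<lambda>x. x - a) ` A" using x by (auto simp: A_def)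
      qed
    qed
    have cA: "card A = 6"
    proof -
      have "card ((\<lambda>x. x - a) ` A) = card A" by (rule card_image) (simp add: inj_on_def)
      then show ?thesis using imA six by simp
    qed
    have npx: "- p - e \<noteq> e" if "e \<in> C" for e using that p(1) ww0[of e p] by auto
    have pairs: "{P. \<exists>x y. P = {x, y} \<and> x \<in> C \<and> y \<in> C \<and> x \<noteq> y \<and> is_line {p, x, y}} = (\<lambda>e. {e, - p - e}) ` A"
    proof
      show "{P. \<exists>x y. P = {x, y} \<and> x \<in> C \<and> y \<in> C \<and> x \<noteq> y \<and> is_line {p, x, y}} \<subseteq> (\<lambda>e. {e, - p - e}) ` A"
      proof
        fix P assume "P \<in> {P. \<exists>x y. P = {x, y} \<and> x \<in> C \<and> y \<in> C \<and> x \<noteq> y \<and> is_line {p, x, y}}"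
        then obtain x y where xy: "P = {x, y}" "x \<in> C" "y \<in> C" "is_line {p, x, y}" by blast
        have "p + x + y = 0" using xy(4) by (simp add: is_line_iff)
        then have "y = - p - x" by (rule vid4)
        then show "P \<in> (\<lambda>e. {e, - p - e}) ` A" using xy by (auto simp: A_def)
      qed
      show "(\<lambda>e. {e, - p - e}) ` A \<subseteq> {P. \<exists>x y. P = {x, y} \<and> x \<in> C \<and> y \<in> C \<and> x \<noteq> y \<and> is_line {p, x, y}}"
      proof
        fix P assume "P \<in> (\<lambda>e. {e, - p - e}) ` A"
        then obtain e where e: "e \<in> C" "- p - e \<in> C" "P = {e, - p - e}" by (auto simp: A_def)
        have "is_line {p, e, - p - e}"
          unfolding is_line_iff using e p(1) npx[OF e(1)] by auto
        then have "\<exists>x y. P = {x, y} \<and> x \<in> C \<and> y \<in> C \<and> x \<noteq> y \<and> is_line {p, x, y}"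
          using e npx[OF e(1)] by (intro exI[of _ e] exI[of _ "- p - e"]) auto
        then show "P \<in> {P. \<exists>x y. P = {x, y} \<and> x \<in> C \<and> y \<in> C \<and> x \<noteq> y \<and> is_line {p, x, y}}"
          by (rule CollectI)
      qed
    qed
    have "2 * card ((\<lambda>e. {e, - p - e}) ` A) = card A"
    proof (rule pair_card)
      show "finite A" by simp
      show "\<forall>e\<in>A. - p - e \<in> A \<and> - p - e \<noteq> e"
      proof
        fix e assume e: "e \<in> A"
        have "- p - (- p - e) = e" by (simp add: algebra_simps)
        then show "- p - e \<in> A \<and> - p - e \<noteq> e" using e npx by (auto simp: A_def)
      qed
    qed
    then show ?thesis unfolding lines_completed_def pairs using cA by simp
  qed
  show ?thesis using part1 part2 by blast
qed

end
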